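(* Let $q$ be a prime power, $m>4$, $F=\mathbb F_q$, $V=\mathbb F_q^m$. Let $E\subset E_1$ be subspaces of $\bigwedge^2V$ with $\dim E_1=\dim E+1$, and assume $E$ is decomposable of dimension $r\ge1$ and $E_1$ is not decomposable. Then $E_1\setminus E$ contains at most $q^{r-1}(q-1)$ decomposable elements.
   Context: A nonzero $\omega\in\bigwedge^2V$ is decomposable if $\omega=u\wedge v$ for some $u,v\in V$; a subspace of $\bigwedge^2V$ is decomposable if all its nonzero elements are decomposable. *)

theory Defs
  imports "HOL-Analysis.Analysis"
begin

text \<open>Model of the exterior square: V = F^n (n a finite index type, dim V = CARD('n)),
  V \<otimes> V = F^('n \<times> 'n), and u \<and> v = u \<otimes> v - v \<otimes> u.\<close>

definition wedge :: "'a::field ^ 'n::finite \<Rightarrow> 'a ^ 'n \<Rightarrow> 'a ^ ('n \<times> 'n)" where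
  "wedge u v = (\<chi> p. u $ fst p * v $ snd p - u $ snd p * v $ fst p)"

definition Wedge2 :: "('a::field ^ ('n::finite \<times> 'n)) set" where
  "Wedge2 = vec.span (range (\<lambda>(u, v). wedge u v))"

definition decomposable :: "'a::field ^ ('n::finite \<times> 'n) \<Rightarrow> bool" where
  "decomposable w \<longleftrightarrow> w \<noteq> 0 \<and> (\<exists>u v. w = wedge u v)"

definition decomposable_subspace :: "('a::field ^ ('n::finite \<times> 'n)) set \<Rightarrow> bool" where
  "decomposable_subspace E \<longleftrightarrow> (\<forall>w\<in>E. w \<noteq> 0 \<longrightarrow> decomposable w)"

end

theory Submission
  imports Defs
begin

definition PL :: "'a::field ^ ('n::finite \<times> 'n) \<Rightarrow> 'n \<Rightarrow> 'n \<Rightarrow> 'n \<Rightarrow> 'n \<Rightarrow> 'a" where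
  "PL x i j k l = x$(i,j)*x$(k,l) - x$(i,k)*x$(j,l) + x$(i,l)*x$(j,k)"

lemma PL_wedge: "PL (wedge u v) i j k l = 0"
  unfolding PL_def wedge_def by (simp add: algebra_simps)

lemma PL_zero: "PL 0 i j k l = 0"
  unfolding PL_def by simp

lemma decomp_iff:
  fixes x :: "'a::field ^ ('n::finite \<times> 'n)"
  shows "decomposable x \<longleftrightarrow> x \<noteq> 0 \<and> (\<forall>i j k l. PL x i j k l = 0)"
proof
  assume "decomposable x" then show "x \<noteq> 0 \<and> (\<forall>i j k l. PL x i j k l = 0)"
    unfolding decomposable_def using PL_wedge by auto
next
  assume A: "x \<noteq> 0 \<and> (\<forall>i j k l. PL x i j k l = 0)"
  then obtain p where p: "x $ p \<noteq> 0" by (metis vec_eq_iff zero_index)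
  obtain a b where ab: "p = (a,b)" by (cases p)
  have xab: "x$(a,b) \<noteq> 0" using p ab by simp
  define u :: "'a^'n" where "u = (\<chi> i. x$(i,a))"
  define v :: "'a^'n" where "v = (\<chi> j. x$(j,b) / x$(a,b))"
  have "x = wedge u v"
    unfolding vec_eq_iff
  proof
    fix q :: "'n \<times> 'n"
    obtain i j where q: "q = (i,j)" by (cases q)
    have "PL x i j a b = 0" using A by blast
    hence "x$(i,j)*x$(a,b) = x$(i,a)*x$(j,b) - x$(i,b)*x$(j,a)"
      unfolding PL_def by (simp add: algebra_simps)
    hence "x$(i,j) = (x$(i,a)*x$(j,b) - x$(i,b)*x$(j,a)) / x$(a,b)"
      using xab by (simp add: field_simps)
    thus "x $ q = wedge u v $ q"
      unfolding q wedge_def u_def v_def using xab by (simp add: field_simps)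
  qed
  thus "decomposable x" using A unfolding decomposable_def by blast
qed

lemma card_span_indep:
  fixes B :: "('a::{finite,field} ^ ('m::finite)) set"
  assumes "finite B" "vec.independent B"
  shows "card (vec.span B) = CARD('a) ^ card B"
  using assms
proof (induction B rule: finite_induct)
  case empty
  then show ?case by simp
next
  case (insert b B)
  have indB: "vec.independent B" using insert.prems vec.independent_mono by blast
  have bnot: "b \<notin> vec.span B"
    using insert.prems insert.hyps(2) by (simp add: vec.independent_insert)
  have bij: "bij_betw (\<lambda>(c, x). c *s b + x) (UNIV \<times> vec.span B) (vec.span (insert b B))"
    unfolding bij_betw_def
  proof
    show "inj_on (\<lambda>(c, x). c *s b + x) (UNIV \<times> vec.span B)"
    proof (rule inj_onI, clarsimp)
      fix c x c' x'
      assume x: "x \<in> vec.span B" and x': "x' \<in> vec.span B" and e: "c *s b + x = c' *s b + x'"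
      have "(c - c') *s b = x' - x" using e by (simp add: algebra_simps vector_sadd_rdistrib vector_ssub_ldistrib)
      hence "(c - c') *s b \<in> vec.span B" using x x' vec.span_diff by metis
      have "c = c'"
      proof (rule ccontr)
        assume ne: "c \<noteq> c'"
        have "inverse (c - c') *s ((c - c') *s b) \<in> vec.span B"
          using \<open>(c - c') *s b \<in> vec.span B\<close> vec.span_scale by blast
        moreover have "inverse (c - c') *s ((c - c') *s b) = b"
          using ne by (metis right_minus_eq vec.scale_scale left_inverse vec.scale_one)
        ultimately have "b \<in> vec.span B" by simp
        thus False using bnot by blast
      qed
      then show "c = c' \<and> x = x'" using e by simp
    qed
    show "(\<lambda>(c, x). c *s b + x) ` (UNIV \<times> vec.span B) = vec.span (insert b B)"
    proof
      show "(\<lambda>(c, x). c *s b + x) ` (UNIV \<times> vec.span B) \<subseteq> vec.span (insert b B)"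
      proof (clarsimp simp: vec.span_insert)
        fix a x assume "x \<in> vec.span B"
        then show "\<exists>k. a *s b + x - k *s b \<in> vec.span B"
          by (intro exI[where x=a]) simp
      qed
      show "vec.span (insert b B) \<subseteq> (\<lambda>(c, x). c *s b + x) ` (UNIV \<times> vec.span B)"
      proof
        fix y assume "y \<in> vec.span (insert b B)"
        then obtain k where "y - k *s b \<in> vec.span B" by (auto simp: vec.span_insert)
        then show "y \<in> (\<lambda>(c, x). c *s b + x) ` (UNIV \<times> vec.span B)"
          by (intro image_eqI[of _ _ "(k, y - k *s b)"]) auto
      qed
    qed
  qed
  have "card (vec.span (insert b B)) = card ((UNIV :: 'a set) \<times> vec.span B)"
    using bij_betw_same_card[OF bij] by metis
  also have "\<dots> = CARD('a) * card (vec.span B)" by (simp add: card_cartesian_product)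
  also have "\<dots> = CARD('a) ^ card (insert b B)" using insert indB by simp
  finally show ?case .
qed

lemma card_subspace:
  fixes E :: "('a::{finite,field} ^ ('m::finite)) set"
  assumes "vec.subspace E"
  shows "card E = CARD('a) ^ vec.dim E"
proof -
  obtain B where B: "B \<subseteq> E" "vec.independent B" "E \<subseteq> vec.span B" "card B = vec.dim E"
    using vec.basis_exists by blast
  have "vec.span B = E" using B assms vec.span_minimal by blast
  moreover have "finite B" using B(2) vec.finiteI_independent by blast
  ultimately show ?thesis using card_span_indep B by metis
qed

theorem lemma6p4:
  fixes E E1 :: "('a::{finite,field} ^ ('n::finite \<times> 'n)) set"
    and r :: nat
  assumes m: "CARD('n) > 4"
    and E_sub: "vec.subspace E" and E1_sub: "vec.subspace E1"
    and E_W: "E \<subseteq> Wedge2" and E1_W: "E1 \<subseteq> Wedge2"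
    and EE1: "E \<subseteq> E1"
    and dimE1: "vec.dim E1 = vec.dim E + 1"
    and dimE: "vec.dim E = r" and r: "r \<ge> 1"
    and decE: "decomposable_subspace E"
    and ndecE1: "\<not> decomposable_subspace E1"
  shows "card {w \<in> E1 - E. decomposable w} \<le> CARD('a) ^ (r - 1) * (CARD('a) - 1)"
proof -
  let ?q = "CARD('a)"
  obtain z where zE1: "z \<in> E1" and z0: "z \<noteq> 0" and zd: "\<not> decomposable z"
    using ndecE1 unfolding decomposable_subspace_def by blast
  obtain i j k l where Pz: "PL z i j k l \<noteq> 0" using zd z0 decomp_iff by blast
  have zE: "z \<notin> E" using decE zd z0 unfolding decomposable_subspace_def by blast
  define \<pi> where "\<pi> x = PL x i j k l" for x :: "'a ^ ('n \<times> 'n)"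
  define \<beta> where "\<beta> e = z$(i,j)*e$(k,l) + e$(i,j)*z$(k,l) - z$(i,k)*e$(j,l) - e$(i,k)*z$(j,l)
      + z$(i,l)*e$(j,k) + e$(i,l)*z$(j,k)" for e :: "'a ^ ('n \<times> 'n)"
  have \<pi>_exp: "\<pi> (c *s z + e) = c*c*\<pi> z + c * \<beta> e + \<pi> e" for c e
    unfolding \<pi>_def \<beta>_def PL_def by (simp add: algebra_simps)
  have \<beta>_add: "\<beta> (x + y) = \<beta> x + \<beta> y" for x y unfolding \<beta>_def by (simp add: algebra_simps)
  have \<beta>_scale: "\<beta> (c *s x) = c * \<beta> x" for c x unfolding \<beta>_def by (simp add: algebra_simps)
  have \<beta>_diff: "\<beta> (x - y) = \<beta> x - \<beta> y" for x y unfolding \<beta>_def by (simp add: algebra_simps)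
  have \<pi>E: "\<pi> e = 0" if "e \<in> E" for e
    using decE that decomp_iff PL_zero unfolding decomposable_subspace_def \<pi>_def by metis
  have spanE: "vec.span E = E" using E_sub vec.span_eq_iff by blast
  have E1eq: "E1 = vec.span (insert z E)"
  proof
    show "vec.span (insert z E) \<subseteq> E1" using E1_sub EE1 zE1 vec.span_minimal by blast
    have "vec.dim (insert z E) = vec.dim E + 1" using vec.dim_insert[of z E] zE spanE by simp
    hence "E1 \<subseteq> vec.span (insert z E)"
      using vec.dim_eq_span[of "insert z E" E1] EE1 zE1 dimE1 vec.span_superset[of E1] by simp
    thus "E1 \<subseteq> vec.span (insert z E)" .
  qed
  have dec1: "\<exists>c. x - c *s z \<in> E" if "x \<in> E1" for x
    using that E1eq spanE by (auto simp: vec.span_insert)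
  define c where "c x = (SOME c. x - c *s z \<in> E)" for x
  define g where "g x = x - c x *s z" for x
  have gE: "g x \<in> E" if "x \<in> E1" for x
    using someI_ex[OF dec1[OF that]] unfolding g_def c_def by simp
  have xdec: "x = c x *s z + g x" for x unfolding g_def by simp
  let ?S = "{w \<in> E1 - E. decomposable w}"
  let ?T = "{e \<in> E. \<beta> e \<noteq> 0}"
  have cnz: "c x \<noteq> 0" if "x \<in> E1" "x \<notin> E" for x
  proof
    assume "c x = 0" then have "x = g x" using xdec[of x] by simp
    thus False using gE that by metis
  qed
  have key: "c x = - \<beta> (g x) / \<pi> z" if "x \<in> ?S" for x
  proof -
    have "\<pi> x = 0" using that decomp_iff unfolding \<pi>_def by blast
    hence "c x * c x * \<pi> z + c x * \<beta> (g x) + \<pi> (g x) = 0" using \<pi>_exp xdec by metis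
    hence "c x * (c x * \<pi> z + \<beta> (g x)) = 0" using \<pi>E gE that by (simp add: algebra_simps)
    hence "c x * \<pi> z + \<beta> (g x) = 0" using cnz that by simp
    hence "\<beta> (g x) = - (c x * \<pi> z)" by (simp add: add_eq_0_iff)
    hence "c x * \<pi> z = - \<beta> (g x)" by simp
    thus ?thesis using Pz unfolding \<pi>_def by (simp add: field_simps)
  qed
  have inj: "inj_on g ?S"
  proof (rule inj_onI)
    fix x y assume x: "x \<in> ?S" and y: "y \<in> ?S" and e: "g x = g y"
    have "c x = c y" using key[OF x] key[OF y] e by simp
    thus "x = y" using xdec[of x] xdec[of y] e by metis
  qed
  have img: "g ` ?S \<subseteq> ?T"
  proof
    fix e assume "e \<in> g ` ?S"
    then obtain x where x: "x \<in> ?S" and ex: "e = g x" by blast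
    have "\<beta> e \<noteq> 0" using key[OF x] cnz x ex by auto
    thus "e \<in> ?T" using gE x ex by auto
  qed
  have finE: "finite E" by simp
  have cardS: "card ?S \<le> card ?T"
    using card_inj_on_le[OF inj img] finE by simp
  have cardE: "card E = ?q ^ r" using card_subspace[OF E_sub] dimE by simp
  have "card ?T \<le> ?q ^ (r - 1) * (?q - 1)"
  proof (cases "?T = {}")
    case True then have "card ?T = 0" by (metis card.empty)
    then show ?thesis by (metis le0)
  next
    case False
    then obtain e0 where e0: "e0 \<in> E" "\<beta> e0 \<noteq> 0" by blast
    let ?K = "{e \<in> E. \<beta> e = 0}"
    have bij: "bij_betw (\<lambda>(a, x). a *s e0 + x) (UNIV \<times> ?K) E"
      unfolding bij_betw_def
    proof
      show "inj_on (\<lambda>(a, x). a *s e0 + x) (UNIV \<times> ?K)"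
      proof (rule inj_onI, clarsimp)
        fix a x a' x'
        assume x: "\<beta> x = 0" and x': "\<beta> x' = 0" and e: "a *s e0 + x = a' *s e0 + x'"
        have "\<beta> (a *s e0 + x) = \<beta> (a' *s e0 + x')" using e by simp
        hence "a * \<beta> e0 = a' * \<beta> e0" using x x' \<beta>_add \<beta>_scale by simp
        hence "a = a'" using e0 by simp
        then show "a = a' \<and> x = x'" using e by simp
      qed
      show "(\<lambda>(a, x). a *s e0 + x) ` (UNIV \<times> ?K) = E"
      proof
        show "(\<lambda>(a, x). a *s e0 + x) ` (UNIV \<times> ?K) \<subseteq> E"
          using e0 E_sub by (auto intro!: vec.subspace_add vec.subspace_scale)
        show "E \<subseteq> (\<lambda>(a, x). a *s e0 + x) ` (UNIV \<times> ?K)"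
        proof
          fix y assume y: "y \<in> E"
          define a where "a = \<beta> y / \<beta> e0"
          have "y - a *s e0 \<in> E" using y e0 E_sub by (auto intro!: vec.subspace_diff vec.subspace_scale)
          moreover have "\<beta> (y - a *s e0) = 0" using e0 unfolding a_def \<beta>_diff \<beta>_scale by simp
          ultimately show "y \<in> (\<lambda>(a, x). a *s e0 + x) ` (UNIV \<times> ?K)"
            by (intro image_eqI[of _ _ "(a, y - a *s e0)"]) auto
        qed
      qed
    qed
    have cK: "card E = ?q * card ?K"
      using bij_betw_same_card[OF bij] by (simp add: card_cartesian_product)
    have "?q ^ r = ?q * ?q ^ (r - 1)" using r by (metis Suc_diff_le diff_Suc_1 power_Suc)
    hence cK2: "card ?K = ?q ^ (r - 1)" using cK cardE by simp
    have "?T = E - ?K" by auto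
    hence "card ?T = card E - card ?K" using finE by (simp add: card_Diff_subset)
    also have "\<dots> = ?q ^ (r - 1) * (?q - 1)" using cK cK2 by (simp add: algebra_simps)
    finally show ?thesis by simp
  qed
  thus ?thesis using cardS by linarith
qed

end
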